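(* Let $\delta=10^{-10}$, let $k\ge\delta^{-2}$ be an integer, and let $G$ be a graph on $n\le(1+\delta)k$ vertices with average degree $d(G)>k-1$. Set $a:=n-k$ and let $b$ be the number of vertices of $G$ of degree at most $\frac{2k}{3}+a$. Suppose that the maximum degree satisfies $\Delta(G)<k+b$. Then more than $k/6$ vertices of $G$ have degree at least $k$.
   Context: The average degree of a graph $G$ is $d(G)=2|E(G)|/|V(G)|$; $\Delta(G)$ is the maximum degree. *)

theory Defs
  imports Complex_Main
begin

definition simple_graph :: "'a set \<Rightarrow> 'a set set \<Rightarrow> bool" where
  "simple_graph V E \<longleftrightarrow> finite V \<and> (\<forall>e\<in>E. e \<subseteq> V \<and> card e = 2)"

definition degree :: "'a set set \<Rightarrow> 'a \<Rightarrow> nat" where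
  "degree E v = card {e \<in> E. v \<in> e}"

definition avg_degree :: "'a set \<Rightarrow> 'a set set \<Rightarrow> real" where
  "avg_degree V E = 2 * real (card E) / real (card V)"

definition max_degree :: "'a set \<Rightarrow> 'a set set \<Rightarrow> nat" where
  "max_degree V E = Max (degree E ` V)"

end

theory Submission
  imports Defs
begin

lemma handshake:
  assumes "simple_graph V E"
  shows "(\<Sum>v\<in>V. real (degree E v)) = 2 * real (card E)"
proof -
  have fV: "finite V" and sub: "\<And>e. e \<in> E \<Longrightarrow> e \<subseteq> V \<and> card e = 2"
    using assms unfolding simple_graph_def by auto
  have fE: "finite E"
    by (rule finite_subset[of E "Pow V"]) (use fV sub in auto)
  have "(\<Sum>v\<in>V. real (degree E v)) = (\<Sum>v\<in>V. \<Sum>e\<in>E. if v \<in> e then 1 else (0::real))"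
    unfolding degree_def using fE by (simp add: sum.If_cases Int_def conj_commute)
  also have "\<dots> = (\<Sum>e\<in>E. \<Sum>v\<in>V. if v \<in> e then 1 else (0::real))"
    by (rule sum.swap)
  also have "\<dots> = (\<Sum>e\<in>E. 2)"
  proof (rule sum.cong[OF refl])
    fix e assume "e \<in> E"
    with sub have "e \<subseteq> V" "card e = 2" by auto
    then have "V \<inter> e = e" by auto
    then show "(\<Sum>v\<in>V. if v \<in> e then 1 else (0::real)) = 2"
      using fV \<open>card e = 2\<close> by (simp add: sum.If_cases)
  qed
  finally show ?thesis by simp
qed

theorem mainTheorem4:
  fixes V :: "'a set" and E :: "'a set set" and k :: nat and \<delta> :: real
  assumes "\<delta> = 10 powr (-10)"
    and "real k \<ge> 1 / \<delta>^2"
    and "simple_graph V E"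
    and "real (card V) \<le> (1 + \<delta>) * real k"
    and "avg_degree V E > real k - 1"
    and "a = real (card V) - real k"
    and "b = card {v \<in> V. real (degree E v) \<le> 2 * real k / 3 + a}"
    and "max_degree V E < k + b"
  shows "real (card {v \<in> V. degree E v \<ge> k}) > real k / 6"
proof -
  have d: "\<delta> = 1 / 10^10" using assms(1) by (simp add: powr_minus powr_realpow)
  have k: "real k \<ge> 10^20" using assms(2) d by (simp add: power_one_over)
  have fV: "finite V" using assms(3) unfolding simple_graph_def by auto
  define n where "n = card V"
  define S where "S = {v \<in> V. degree E v \<ge> k}"
  define B where "B = {v \<in> V. real (degree E v) \<le> 2 * real k / 3 + a}"
  define s where "s = card S"
  have bB: "b = card B" using assms(7) B_def by simp
  have npos: "n > 0"
  proof (rule ccontr)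
    assume "\<not> n > 0" then have "n = 0" by simp
    then have "avg_degree V E = 0" unfolding avg_degree_def n_def by simp
    with assms(5) k show False by simp
  qed
  have ne: "V \<noteq> {}" using npos n_def by auto
  have aub: "a \<le> \<delta> * real k" using assms(4,6) by (simp add: algebra_simps)
  have sum_gt: "(\<Sum>v\<in>V. real (degree E v)) > (real k - 1) * real n"
    using handshake[OF assms(3)] assms(5) npos unfolding avg_degree_def n_def
    by (simp add: field_simps)
  have bound: "real (degree E v) \<le> (real k - 1) + (if v \<in> S then real b else 0)
      + (if v \<in> B then 2 * real k / 3 + a - real k + 1 else 0)" if v: "v \<in> V" for v
  proof -
    have "degree E v \<le> max_degree V E" unfolding max_degree_def using fV v by simp
    then have dm: "degree E v \<le> k + b - 1" using assms(8) by simp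
    show ?thesis
    proof (cases "v \<in> S")
      case True
      have "v \<notin> B"
      proof
        assume "v \<in> B"
        then have "real (degree E v) \<le> 2 * real k / 3 + a" by (simp add: B_def)
        moreover have "real (degree E v) \<ge> real k" using True by (simp add: S_def)
        moreover have "\<delta> * real k < real k / 3" using d k by simp
        ultimately show False using aub by linarith
      qed
      have "real (degree E v) \<le> real k + real b - 1"
        using dm True k by (cases "k + b") (auto simp: S_def)
      then show ?thesis using True \<open>v \<notin> B\<close> by simp
    next
      case False
      then have "degree E v < k" using v by (simp add: S_def)
      then have lk: "real (degree E v) \<le> real k - 1" by linarith
      show ?thesis
      proof (cases "v \<in> B")
        case True
        then show ?thesis using False by (simp add: B_def)
      next
        case False2: False
        then show ?thesis using False lk by simp
      qed
    qed
  qed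
  have "(\<Sum>v\<in>V. real (degree E v)) \<le> (\<Sum>v\<in>V. (real k - 1) + (if v \<in> S then real b else 0)
      + (if v \<in> B then 2 * real k / 3 + a - real k + 1 else 0))"
    by (rule sum_mono) (rule bound)
  also have "\<dots> = real n * (real k - 1) + real s * real b + real b * (2 * real k / 3 + a - real k + 1)"
  proof -
    have "S = V \<inter> S" "B = V \<inter> B" unfolding S_def B_def by auto
    then show ?thesis using fV
      by (simp add: sum.distrib sum.If_cases n_def s_def bB flip: \<open>S = V \<inter> S\<close> \<open>B = V \<inter> B\<close>)
  qed
  finally have "real b * (real s + a + 1 - real k / 3) > 0"
    using sum_gt by (simp add: algebra_simps)
  then have "real s + a + 1 - real k / 3 > 0"
    by (simp add: zero_less_mult_iff)
  then have "real s > real k / 3 - \<delta> * real k - 1" using aub by linarith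
  moreover have "real k / 3 - \<delta> * real k - 1 \<ge> real k / 6"
  proof -
    have "\<delta> * real k = real k / 10000000000" using d by simp
    moreover have "real k \<ge> 100000000000000000000" using k by simp
    ultimately show ?thesis by linarith
  qed
  ultimately show ?thesis unfolding s_def S_def by linarith
qed

end
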